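(* Assume the standing setting and assumption in the context. Fix $b>r$ with $\mu(r,b]>0$. There exist a constant $C>0$ and an index $N\in\mathbb N$, depending on $d$, $b$ and $\mu$, such that for any interval $(c,h]\subset[b,\infty)$ and any $x\in\mathbb Z^d$ with $|x|_1\ge N$, $$\mathbb E\big[\nu_x(c,h]\big]\ \le\ C\,\mu(c,h].$$
   Context: Setting: $d\ge2$; $\mathcal E^d$ nearest-neighbor edges of $\mathbb Z^d$; $\{\tau_e\}$ i.i.d. non-negative with law $\mu$, distribution function $F$, essential infimum $r$. Standing assumption: $F(r)<p_c(d)$ if $r=0$ and $F(r)<\vec p_c(d)$ if $r>0$ ($p_c(d)$, $\vec p_c(d)$: critical probabilities of Bernoulli bond and oriented bond percolation on $\mathbb Z^d$). $T(\gamma)=\sum_{e\in\gamma}\tau_e$; geodesics are vertex self-avoiding paths minimizing $T$. Fix a deterministic ordering of finite vertex self-avoiding paths; $\pi^{(x)}$ is the first geodesic from $0$ to $x$ in it. $\nu_x(B)=\frac{1}{|\pi^{(x)}|}\#\{e\in\pi^{(x)}:\tau_e\in B\}$. *)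

theory Defs
  imports "HOL-Probability.Probability"
begin

type_synonym vertex = "nat \<Rightarrow> int"
type_synonym edge = "vertex set"

definition Zd :: "nat \<Rightarrow> vertex set" where
  "Zd d = {v. \<forall>i\<ge>d. v i = 0}"

definition l1norm :: "nat \<Rightarrow> vertex \<Rightarrow> int" where
  "l1norm d v = (\<Sum>i<d. \<bar>v i\<bar>)"

definition origin :: vertex where "origin = (\<lambda>_. 0)"

definition Ed :: "nat \<Rightarrow> edge set" where
  "Ed d = {{u, v} | u v. u \<in> Zd d \<and> v \<in> Zd d \<and> l1norm d (\<lambda>i. u i - v i) = 1}"

definition path_edges :: "vertex list \<Rightarrow> edge list" where
  "path_edges p = map (\<lambda>(u, v). {u, v}) (zip p (tl p))"

definition sa_path :: "nat \<Rightarrow> vertex list \<Rightarrow> vertex \<Rightarrow> vertex \<Rightarrow> bool" where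
  "sa_path d p x y \<longleftrightarrow> p \<noteq> [] \<and> hd p = x \<and> last p = y \<and> distinct p \<and>
     set p \<subseteq> Zd d \<and> set (path_edges p) \<subseteq> Ed d"

definition passage :: "(edge \<Rightarrow> real) \<Rightarrow> vertex list \<Rightarrow> real" where
  "passage \<omega> p = sum_list (map \<omega> (path_edges p))"

definition geodesics :: "nat \<Rightarrow> (edge \<Rightarrow> real) \<Rightarrow> vertex \<Rightarrow> vertex list set" where
  "geodesics d \<omega> x = {p. sa_path d p origin x \<and>
     (\<forall>q. sa_path d q origin x \<longrightarrow> passage \<omega> p \<le> passage \<omega> q)}"

text \<open>First geodesic from 0 to x w.r.t. the (well-)ordering R of paths
  (the empty list if no geodesic exists, an event of probability zero).\<close>
definition first_geodesic ::
  "(vertex list \<times> vertex list) set \<Rightarrow> nat \<Rightarrow> (edge \<Rightarrow> real) \<Rightarrow> vertex \<Rightarrow> vertex list" where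
  "first_geodesic R d \<omega> x =
     (if geodesics d \<omega> x = {} then []
      else (SOME p. p \<in> geodesics d \<omega> x \<and> (\<forall>q\<in>geodesics d \<omega> x. (p, q) \<in> R)))"

definition nu ::
  "(vertex list \<times> vertex list) set \<Rightarrow> nat \<Rightarrow> (edge \<Rightarrow> real) \<Rightarrow> vertex \<Rightarrow> real set \<Rightarrow> real" where
  "nu R d \<omega> x B =
     (let \<pi> = first_geodesic R d \<omega> x in
       real (card {e \<in> set (path_edges \<pi>). \<omega> e \<in> B}) / real (length (path_edges \<pi>)))"

definition env :: "nat \<Rightarrow> real measure \<Rightarrow> (edge \<Rightarrow> real) measure" where
  "env d \<mu> = PiM (Ed d) (\<lambda>_. \<mu>)"

definition perc :: "nat \<Rightarrow> real \<Rightarrow> (edge \<Rightarrow> bool) measure" where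
  "perc d p = PiM (Ed d) (\<lambda>_. measure_pmf (bernoulli_pmf p))"

definition open_rel :: "nat \<Rightarrow> (edge \<Rightarrow> bool) \<Rightarrow> (vertex \<times> vertex) set" where
  "open_rel d \<eta> = {(u, v). {u, v} \<in> Ed d \<and> \<eta> {u, v}}"

definition oriented_open_rel :: "nat \<Rightarrow> (edge \<Rightarrow> bool) \<Rightarrow> (vertex \<times> vertex) set" where
  "oriented_open_rel d \<eta> =
     {(u, v). {u, v} \<in> Ed d \<and> \<eta> {u, v} \<and> (\<exists>i<d. v = u(i := u i + 1))}"

definition theta :: "nat \<Rightarrow> real \<Rightarrow> real" where
  "theta d p = measure (perc d p)
     {\<eta> \<in> space (perc d p). infinite {v. (origin, v) \<in> (open_rel d \<eta>)\<^sup>*}}"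

definition oriented_theta :: "nat \<Rightarrow> real \<Rightarrow> real" where
  "oriented_theta d p = measure (perc d p)
     {\<eta> \<in> space (perc d p). infinite {v. (origin, v) \<in> (oriented_open_rel d \<eta>)\<^sup>*}}"

definition p_c :: "nat \<Rightarrow> real" where
  "p_c d = Sup {p \<in> {0..1}. theta d p = 0}"

definition oriented_p_c :: "nat \<Rightarrow> real" where
  "oriented_p_c d = Sup {p \<in> {0..1}. oriented_theta d p = 0}"

definition ess_inf_law :: "real measure \<Rightarrow> real" where
  "ess_inf_law \<mu> = Sup {t. measure \<mu> {..<t} = 0}"

definition distr_fun :: "real measure \<Rightarrow> real \<Rightarrow> real" where
  "distr_fun \<mu> t = measure \<mu> {..t}"

definition standing_assumption :: "nat \<Rightarrow> real measure \<Rightarrow> bool" where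
  "standing_assumption d \<mu> \<longleftrightarrow>
     (ess_inf_law \<mu> = 0 \<longrightarrow> distr_fun \<mu> (ess_inf_law \<mu>) < p_c d) \<and>
     (ess_inf_law \<mu> > 0 \<longrightarrow> distr_fun \<mu> (ess_inf_law \<mu>) < oriented_p_c d)"

end

theory Submission
  imports Defs
begin

lemma path_edges_simps[simp]:
  "path_edges [] = []" "path_edges [a] = []"
  "path_edges (a # b # l) = {a, b} # path_edges (b # l)"
  by (simp_all add: path_edges_def)

lemma path_edges_sub: "e \<in> set (path_edges p) \<Longrightarrow> e \<subseteq> set p"
  by (induction p rule: induct_list012) auto

lemma distinct_path_edges: "distinct p \<Longrightarrow> distinct (path_edges p)"
proof (induction p rule: induct_list012)
  case (3 a b l)
  have "{a, b} \<notin> set (path_edges (b # l))"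
    using path_edges_sub[of "{a,b}" "b # l"] 3(3) by auto
  then show ?case using 3 by simp
qed auto

lemma count_list_distinct: "distinct l \<Longrightarrow> count_list l y = (if y \<in> set l then 1 else 0)"
  by (induction l) auto

lemma sum_list_upd:
  "sum_list (map (w(e := t)) l) = sum_list (map (w(e := s)) l) + (t - s) * real (count_list l e)"
  by (induction l) (auto simp: algebra_simps)

lemma passage_upd:
  "passage (w(e := t)) q = passage (w(e := s)) q + (t - s) * real (count_list (path_edges q) e)"
  unfolding passage_def by (rule sum_list_upd)

lemma wo_least:
  assumes "Well_order R" "Field R = UNIV" "S \<noteq> {}"
  shows "\<exists>p\<in>S. \<forall>q\<in>S. (p, q) \<in> R"
proof -
  interpret wo_rel R using assms(1) by (simp add: wo_rel_def)
  have "minim S \<in> S" "\<forall>q\<in>S. (minim S, q) \<in> R"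
    using assms minim_in[of S] minim_least[of S] by auto
  then show ?thesis by blast
qed

lemma fg_prop:
  assumes "Well_order R" "Field R = UNIV" "geodesics d w x \<noteq> {}"
  shows "first_geodesic R d w x \<in> geodesics d w x \<and>
         (\<forall>q\<in>geodesics d w x. (first_geodesic R d w x, q) \<in> R)"
proof -
  have "\<exists>p. p \<in> geodesics d w x \<and> (\<forall>q\<in>geodesics d w x. (p, q) \<in> R)"
    using wo_least[OF assms] by blast
  from someI_ex[OF this] show ?thesis using assms(3) unfolding first_geodesic_def by simp
qed

lemma fg_unique:
  assumes "Well_order R" "Field R = UNIV" "p \<in> geodesics d w x" "\<forall>q\<in>geodesics d w x. (p, q) \<in> R"
  shows "first_geodesic R d w x = p"
proof -
  have ne: "geodesics d w x \<noteq> {}" using assms by auto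
  note f = fg_prop[OF assms(1,2) ne]
  have "antisym R" using assms(1) by (simp add: order_on_defs)
  then show ?thesis using f assms(3,4) by (auto dest: antisymD)
qed

lemma fg_empty: "geodesics d w x = {} \<Longrightarrow> first_geodesic R d w x = []"
  by (simp add: first_geodesic_def)

lemma fg_sa:
  assumes "Well_order R" "Field R = UNIV" "first_geodesic R d w x \<noteq> []"
  shows "sa_path d (first_geodesic R d w x) origin x"
proof (cases "geodesics d w x = {}")
  case True then show ?thesis using fg_empty[of d w x R] assms(3) by simp
next
  case False then show ?thesis using fg_prop[OF assms(1,2) False] by (simp add: geodesics_def)
qed

lemma lower:
  assumes wo: "Well_order R" "Field R = UNIV"
    and e: "e \<in> set (path_edges (first_geodesic R d (w(e := t)) x))" and st: "s < t"
  shows "first_geodesic R d (w(e := s)) x = first_geodesic R d (w(e := t)) x"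
proof -
  let ?p = "first_geodesic R d (w(e := t)) x"
  let ?Gt = "geodesics d (w(e := t)) x"
  let ?Gs = "geodesics d (w(e := s)) x"
  have ne: "?Gt \<noteq> {}" using e fg_empty[of d "w(e := t)" x R] by auto
  note f = fg_prop[OF wo ne]
  have sap: "sa_path d ?p origin x" using f by (simp add: geodesics_def)
  have cnt: "count_list (path_edges q) e \<le> 1" if "sa_path d q origin x" for q
    using that distinct_path_edges count_list_distinct[of "path_edges q" e]
    by (auto simp: sa_path_def)
  have cp: "count_list (path_edges ?p) e = 1"
    using e sap distinct_path_edges count_list_distinct[of "path_edges ?p" e]
    by (auto simp: sa_path_def)
  have pt: "passage (w(e := t)) ?p \<le> passage (w(e := t)) q" if "sa_path d q origin x" for q
    using f that by (auto simp: geodesics_def)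
  have ps: "passage (w(e := s)) ?p \<le> passage (w(e := s)) q" if q: "sa_path d q origin x" for q
  proof -
    have "count_list (path_edges q) e \<le> 1" using cnt q by blast
    then have "(t - s) * real (count_list (path_edges q) e) \<le> (t - s)"
      using st by (simp add: mult_left_le)
    then show ?thesis using pt[OF q] passage_upd[where w=w and e=e and t=t and s=s and q="?p"] passage_upd[where w=w and e=e and t=t and s=s and q="q"] cp
      by simp
  qed
  have pGs: "?p \<in> ?Gs" using ps sap by (simp add: geodesics_def)
  have sub: "q \<in> ?Gt" if q: "q \<in> ?Gs" for q
  proof -
    have qs: "sa_path d q origin x" and le: "passage (w(e := s)) q \<le> passage (w(e := s)) ?p"
      using q sap by (auto simp: geodesics_def)
    have c: "count_list (path_edges q) e \<le> 1" using cnt qs by blast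
    show ?thesis
    proof (cases "count_list (path_edges q) e = 1")
      case True
      then have "passage (w(e := t)) q \<le> passage (w(e := t)) ?p"
        using le passage_upd[where w=w and e=e and t=t and s=s and q="?p"] passage_upd[where w=w and e=e and t=t and s=s and q="q"] cp by simp
      then show ?thesis using qs pt by (force simp: geodesics_def)
    next
      case False
      then have "count_list (path_edges q) e = 0" using c by simp
      then have "passage (w(e := t)) q < passage (w(e := t)) ?p"
        using le passage_upd[where w=w and e=e and t=t and s=s and q="?p"] passage_upd[where w=w and e=e and t=t and s=s and q="q"] cp st by simp
      then show ?thesis using pt[OF qs] by simp
    qed
  qed
  show ?thesis
    by (rule fg_unique[OF wo pGs]) (use f sub in blast)
qed


lemma countable_Zd: "countable (Zd d)"
proof (rule countable_image_inj_on[where f="\<lambda>v. map v [0..<d]"])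
  show "countable ((\<lambda>v. map v [0..<d]) ` Zd d)" by (rule countableI_type)
  show "inj_on (\<lambda>v. map v [0..<d]) (Zd d)"
  proof (rule inj_onI)
    fix u v assume u: "u \<in> Zd d" and v: "v \<in> Zd d" and eq: "map u [0..<d] = map v [0..<d]"
    show "u = v"
    proof
      fix i show "u i = v i"
      proof (cases "i < d")
        case True then show ?thesis using eq by (simp add: map_eq_conv)
      next
        case False then show ?thesis using u v by (simp add: Zd_def)
      qed
    qed
  qed
qed

lemma countable_Ed: "countable (Ed d)"
proof -
  have "Ed d \<subseteq> (\<lambda>(u, v). {u, v}) ` (Zd d \<times> Zd d)" by (auto simp: Ed_def)
  moreover have "countable ((\<lambda>(u, v). {u, v}) ` (Zd d \<times> Zd d))"
    using countable_Zd by auto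
  ultimately show ?thesis by (rule countable_subset)
qed

lemma countable_P: "countable {q. sa_path d q a b}"
proof -
  have "{q. sa_path d q a b} \<subseteq> lists (Zd d)" by (auto simp: sa_path_def)
  then show ?thesis using countable_Zd countable_lists countable_subset by blast
qed

lemma sa_edges: "sa_path d q a b \<Longrightarrow> set (path_edges q) \<subseteq> Ed d"
  by (simp add: sa_path_def)

locale fpp =
  fixes d :: nat and \<mu> :: "real measure" and R :: "(vertex list \<times> vertex list) set" and x :: vertex
  assumes ps: "prob_space \<mu>" and sb: "sets \<mu> = sets borel"
    and wo: "Well_order R" and fR: "Field R = UNIV"
begin

abbreviation "M \<equiv> env d \<mu>"
abbreviation "P \<equiv> {q. sa_path d q origin x}"
abbreviation "fg w \<equiv> first_geodesic R d w x"

definition fe :: "real set \<Rightarrow> edge \<Rightarrow> (edge \<Rightarrow> real) \<Rightarrow> ennreal" where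
  "fe A e w = ennreal (if e \<in> set (path_edges (fg w)) \<and> w e \<in> A
      then 1 / real (length (path_edges (fg w))) else 0)"

lemma probM: "prob_space M"
  unfolding env_def by (rule prob_space_PiM) (use ps in auto)

lemma comp_meas: "e \<in> Ed d \<Longrightarrow> (\<lambda>w. w e) \<in> borel_measurable M"
  unfolding env_def
  using measurable_component_singleton[of e "Ed d" "\<lambda>_. \<mu>"] measurable_cong_sets[OF refl sb]
  by blast

lemma passage_meas: "set l \<subseteq> Ed d \<Longrightarrow> (\<lambda>w. sum_list (map w l)) \<in> borel_measurable M"
proof (induction l)
  case (Cons a l)
  then have "(\<lambda>w. w a) \<in> borel_measurable M" "(\<lambda>w. sum_list (map w l)) \<in> borel_measurable M"
    using comp_meas by auto
  then show ?case by simp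
qed simp

lemma geo_pred: "Measurable.pred M (\<lambda>w. p \<in> geodesics d w x)"
proof (cases "sa_path d p origin x")
  case True
  have "Measurable.pred M (\<lambda>w. \<forall>q\<in>P. passage w p \<le> passage w q)"
  proof (rule measurable_pred_countable(1)[OF countable_P])
    fix q assume "q \<in> P"
    then have [measurable]: "(\<lambda>w. passage w q) \<in> borel_measurable M"
      using passage_meas sa_edges unfolding passage_def by blast
    have [measurable]: "(\<lambda>w. passage w p) \<in> borel_measurable M"
      using passage_meas sa_edges True unfolding passage_def by blast
    show "Measurable.pred M (\<lambda>w. passage w p \<le> passage w q)"
      unfolding Measurable.pred_def by (rule borel_measurable_le) measurable
  qed
  then show ?thesis using True by (simp add: geodesics_def)
next
  case False
  then show ?thesis by (simp add: geodesics_def)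
qed

lemma pi_in: "fg w \<in> insert [] P"
  using fg_sa[OF wo fR, of d w x] by auto

lemma pi_meas: "fg \<in> measurable M (count_space (insert [] P))"
proof -
  have cP: "countable (insert [] P)" using countable_P by auto
  have ne: "[] \<notin> geodesics d w x" for w by (simp add: geodesics_def sa_path_def)
  have e1: "fg -` {[]} \<inter> space M \<in> sets M"
  proof -
    have "fg w = [] \<longleftrightarrow> (\<forall>q\<in>P. q \<notin> geodesics d w x)" for w
    proof
      assume "fg w = []"
      then have "geodesics d w x = {}" using fg_prop[OF wo fR, of d w x] ne by auto
      then show "\<forall>q\<in>P. q \<notin> geodesics d w x" by auto
    next
      assume "\<forall>q\<in>P. q \<notin> geodesics d w x"
      then have "geodesics d w x = {}" by (auto simp: geodesics_def)
      then show "fg w = []" by (rule fg_empty)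
    qed
    then have "fg -` {[]} \<inter> space M = {w \<in> space M. \<forall>q\<in>P. q \<notin> geodesics d w x}" by auto
    moreover have "Measurable.pred M (\<lambda>w. \<forall>q\<in>P. q \<notin> geodesics d w x)"
      by (intro measurable_pred_countable countable_P pred_intros_logic geo_pred)
    ultimately show ?thesis by (simp add: pred_def)
  qed
  have e2: "fg -` {a} \<inter> space M \<in> sets M" if a: "a \<in> P" for a
  proof -
    have "fg w = a \<longleftrightarrow> a \<in> geodesics d w x \<and> (\<forall>q\<in>P. q \<in> geodesics d w x \<longrightarrow> (a, q) \<in> R)" for w
    proof
      assume h: "fg w = a"
      have "a \<noteq> []" using a by (simp add: sa_path_def)
      then have "geodesics d w x \<noteq> {}" using h fg_empty[of d w x R] by auto
      then show "a \<in> geodesics d w x \<and> (\<forall>q\<in>P. q \<in> geodesics d w x \<longrightarrow> (a, q) \<in> R)"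
        using fg_prop[OF wo fR] h by blast
    next
      assume "a \<in> geodesics d w x \<and> (\<forall>q\<in>P. q \<in> geodesics d w x \<longrightarrow> (a, q) \<in> R)"
      then show "fg w = a" by (intro fg_unique[OF wo fR]) (auto simp: geodesics_def)
    qed
    then have "fg -` {a} \<inter> space M = {w \<in> space M. a \<in> geodesics d w x \<and> (\<forall>q\<in>P. q \<in> geodesics d w x \<longrightarrow> (a, q) \<in> R)}"
      by auto
    moreover have "Measurable.pred M (\<lambda>w. a \<in> geodesics d w x \<and> (\<forall>q\<in>P. q \<in> geodesics d w x \<longrightarrow> (a, q) \<in> R))"
      by (intro measurable_pred_countable countable_P pred_intros_logic geo_pred measurable_const) auto
    ultimately show ?thesis by (simp add: pred_def)
  qed
  show ?thesis unfolding measurable_count_space_eq_countable[OF cP]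
    using pi_in e1 e2 by auto
qed

lemma fe_meas:
  assumes e: "e \<in> Ed d" and A: "A \<in> sets borel"
  shows "fe A e \<in> borel_measurable M"
proof -
  have [measurable]: "(\<lambda>w. w e) \<in> borel_measurable M" using comp_meas[OF e] .
  have [measurable]: "A \<in> sets borel" using A .
  have "(\<lambda>w. (\<lambda>p w. ennreal (if e \<in> set (path_edges p) \<and> w e \<in> A
      then 1 / real (length (path_edges p)) else 0)) (fg w) w) \<in> borel_measurable M"
  proof (rule measurable_compose_countable'[OF _ pi_meas])
    fix p
    show "(\<lambda>w. ennreal (if e \<in> set (path_edges p) \<and> w e \<in> A
      then 1 / real (length (path_edges p)) else 0)) \<in> borel_measurable M"
      by measurable
  next
    show "countable (insert [] P)" using countable_P by auto
  qed
  then show ?thesis unfolding fe_def[abs_def] by simp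
qed

end

context fpp begin

lemma fg_edges: "set (path_edges (fg w)) \<subseteq> Ed d"
proof (cases "fg w = []")
  case True then show ?thesis by simp
next
  case False then show ?thesis using fg_sa[OF wo fR False] sa_edges by blast
qed

lemma nu_sum: "ennreal (nu R d w x A) = (\<integral>\<^sup>+e. fe A e w \<partial>count_space (Ed d))"
proof -
  let ?S = "set (path_edges (fg w))"
  let ?c = "1 / real (length (path_edges (fg w)))"
  have "(\<integral>\<^sup>+e. fe A e w \<partial>count_space (Ed d)) = (\<Sum>e\<in>?S. fe A e w)"
    by (rule nn_integral_count_space') (use fg_edges in \<open>auto simp: fe_def\<close>)
  also have "\<dots> = (\<Sum>e\<in>?S. ennreal (if w e \<in> A then ?c else 0))"
    by (rule sum.cong) (auto simp: fe_def)
  also have "\<dots> = ennreal (\<Sum>e\<in>?S. (if w e \<in> A then ?c else 0))"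
    by (rule sum_ennreal) auto
  also have "(\<Sum>e\<in>?S. (if w e \<in> A then ?c else 0)) = (\<Sum>e\<in>{e\<in>?S. w e \<in> A}. ?c)"
    by (rule sum.inter_filter[symmetric]) simp
  also have "\<dots> = nu R d w x A"
    by (simp add: nu_def Let_def)
  finally show ?thesis ..
qed

lemma nu_le1: "nu R d w x A \<le> 1"
proof -
  let ?l = "path_edges (fg w)"
  have "card {e \<in> set ?l. w e \<in> A} \<le> card (set ?l)" by (rule card_mono) auto
  also have "\<dots> \<le> length ?l" by (rule card_length)
  finally have "real (card {e \<in> set ?l. w e \<in> A}) \<le> real (length ?l)" by simp
  then show ?thesis by (simp add: nu_def Let_def divide_le_eq_1)
qed

lemma nu_ge0: "0 \<le> nu R d w x A"
  by (simp add: nu_def Let_def)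

lemma split_int:
  assumes e: "e \<in> Ed d" and g: "g \<in> borel_measurable M"
  shows "(\<integral>\<^sup>+w. g w \<partial>M) = (\<integral>\<^sup>+X. (\<integral>\<^sup>+t. g (X(e := t)) \<partial>\<mu>) \<partial>PiM (Ed d - {e}) (\<lambda>_. \<mu>))"
proof -
  define I where "I = Ed d - {e}"
  have ins: "insert e I = Ed d" using e by (auto simp: I_def)
  interpret PI: prob_space "PiM I (\<lambda>_. \<mu>)" by (rule prob_space_PiM) (use ps in auto)
  interpret mu: prob_space \<mu> by (rule ps)
  interpret pair_sigma_finite \<mu> "PiM I (\<lambda>_. \<mu>)" by unfold_locales
  have D: "distr (\<mu> \<Otimes>\<^sub>M PiM I (\<lambda>_. \<mu>)) (PiM (insert e I) (\<lambda>_. \<mu>)) (\<lambda>(t, X). X(e := t))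
      = PiM (insert e I) (\<lambda>_. \<mu>)"
    by (rule distr_pair_PiM_eq_PiM) (use ps in auto)
  have D': "distr (\<mu> \<Otimes>\<^sub>M PiM I (\<lambda>_. \<mu>)) (PiM (Ed d) (\<lambda>_. \<mu>)) (\<lambda>(t, X). X(e := t))
      = PiM (Ed d) (\<lambda>_. \<mu>)"
    using D unfolding ins .
  have T_eq: "(\<lambda>(t, X). X(e := t)) = (\<lambda>z i. if i = e then fst z else snd z i)"
    by (auto simp: fun_eq_iff)
  have T: "(\<lambda>(t, X). X(e := t)) \<in> measurable (\<mu> \<Otimes>\<^sub>M PiM I (\<lambda>_. \<mu>)) (PiM (insert e I) (\<lambda>_. \<mu>))"
    unfolding T_eq
  proof (rule measurable_PiM_single')
    fix i assume i: "i \<in> insert e I"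
    show "(\<lambda>z. if i = e then fst z else snd z i) \<in> measurable (\<mu> \<Otimes>\<^sub>M PiM I (\<lambda>_. \<mu>)) \<mu>"
    proof (cases "i = e")
      case True then show ?thesis by simp
    next
      case False
      then have "i \<in> I" using i by simp
      then have "(\<lambda>z. snd z i) \<in> measurable (\<mu> \<Otimes>\<^sub>M PiM I (\<lambda>_. \<mu>)) \<mu>"
        using measurable_compose[OF measurable_snd measurable_component_singleton[of i I "\<lambda>_. \<mu>"]]
        by simp
      then show ?thesis using False by simp
    qed
  next
    show "(\<lambda>z i. if i = e then fst z else snd z i) \<in> space (\<mu> \<Otimes>\<^sub>M PiM I (\<lambda>_. \<mu>)) \<rightarrow> (\<Pi>\<^sub>E i\<in>insert e I. space \<mu>)"
    proof
      fix z assume z: "z \<in> space (\<mu> \<Otimes>\<^sub>M PiM I (\<lambda>_. \<mu>))"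
      then have f: "fst z \<in> space \<mu>" and s: "snd z \<in> (\<Pi>\<^sub>E i\<in>I. space \<mu>)"
        by (auto simp: space_pair_measure space_PiM)
      have e': "e \<notin> I" by (simp add: I_def)
      show "(\<lambda>i. if i = e then fst z else snd z i) \<in> (\<Pi>\<^sub>E i\<in>insert e I. space \<mu>)"
        unfolding PiE_iff extensional_def using f s e' by (auto simp: PiE_iff extensional_def)
    qed
  qed
  have gm: "g \<in> borel_measurable (PiM (insert e I) (\<lambda>_. \<mu>))"
    using g by (simp add: env_def ins)
  have "(\<integral>\<^sup>+w. g w \<partial>M) = (\<integral>\<^sup>+w. g w \<partial>distr (\<mu> \<Otimes>\<^sub>M PiM I (\<lambda>_. \<mu>)) (PiM (insert e I) (\<lambda>_. \<mu>)) (\<lambda>(t, X). X(e := t)))"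
    unfolding D unfolding ins env_def by (rule refl)
  also have "\<dots> = (\<integral>\<^sup>+z. g ((\<lambda>(t, X). X(e := t)) z) \<partial>(\<mu> \<Otimes>\<^sub>M PiM I (\<lambda>_. \<mu>)))"
    by (rule nn_integral_distr[OF T]) (simp add: D gm)
  also have "\<dots> = (\<integral>\<^sup>+X. (\<integral>\<^sup>+t. g (X(e := t)) \<partial>\<mu>) \<partial>PiM I (\<lambda>_. \<mu>))"
  proof -
    have m: "(\<lambda>z. g ((\<lambda>(t, X). X(e := t)) z)) \<in> borel_measurable (\<mu> \<Otimes>\<^sub>M PiM I (\<lambda>_. \<mu>))"
      using measurable_comp[OF T gm] by (simp add: comp_def)
    show ?thesis using nn_integral_snd[OF m] by simp
  qed
  finally show ?thesis by (simp add: I_def)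
qed

end

context fpp begin

lemma pointwise:
  assumes bc: "b \<le> c" and mB: "measure \<mu> {r<..b} > 0"
  shows "(\<integral>\<^sup>+t. fe {c<..h} e (X(e := t)) \<partial>\<mu>)
     \<le> (\<integral>\<^sup>+t. ennreal (measure \<mu> {c<..h} / measure \<mu> {r<..b}) * fe {r<..b} e (X(e := t)) \<partial>\<mu>)"
proof -
  let ?A = "{c<..h}" and ?B = "{r<..b}"
  let ?K = "ennreal (measure \<mu> ?A / measure \<mu> ?B)"
  interpret mu: prob_space \<mu> by (rule ps)
  have sA: "?A \<in> sets \<mu>" and sB: "?B \<in> sets \<mu>" using sb by auto
  show ?thesis
  proof (cases "\<exists>t0. t0 \<in> ?A \<and> e \<in> set (path_edges (fg (X(e := t0))))")
    case True
    then obtain t0 where t0A: "t0 \<in> ?A" and t0e: "e \<in> set (path_edges (fg (X(e := t0))))" by blast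
    define p0 where "p0 = fg (X(e := t0))"
    define \<kappa> where "\<kappa> = 1 / real (length (path_edges p0))"
    have k0: "0 \<le> \<kappa>" by (simp add: \<kappa>_def)
    have low: "fg (X(e := s)) = p0" if "s \<le> b" for s
      unfolding p0_def
      by (rule lower[OF wo fR t0e]) (use that t0A bc in auto)
    have Ab: "fe ?A e (X(e := t)) \<le> ennreal \<kappa> * indicator ?A t" for t
    proof (cases "t \<in> ?A \<and> e \<in> set (path_edges (fg (X(e := t))))")
      case True
      then have "fg (X(e := b)) = fg (X(e := t))"
        using bc by (intro lower[OF wo fR]) auto
      then have "fg (X(e := t)) = p0" using low by simp
      then show ?thesis using True by (simp add: fe_def \<kappa>_def)
    next
      case False then show ?thesis by (auto simp: fe_def)
    qed
    have Beq: "fe ?B e (X(e := t)) = ennreal \<kappa> * indicator ?B t" for t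
    proof (cases "t \<in> ?B")
      case True
      then have "fg (X(e := t)) = p0" using low by simp
      then show ?thesis using True t0e by (simp add: fe_def \<kappa>_def p0_def)
    next
      case False then show ?thesis by (auto simp: fe_def)
    qed
    have "(\<integral>\<^sup>+t. fe ?A e (X(e := t)) \<partial>\<mu>) \<le> (\<integral>\<^sup>+t. ennreal \<kappa> * indicator ?A t \<partial>\<mu>)"
      by (rule nn_integral_mono) (rule Ab)
    also have "\<dots> = ennreal \<kappa> * ennreal (measure \<mu> ?A)"
      using sA by (simp add: nn_integral_cmult_indicator mu.emeasure_eq_measure)
    also have "\<dots> = ?K * (ennreal \<kappa> * ennreal (measure \<mu> ?B))"
    proof -
      have "\<kappa> * measure \<mu> ?A = measure \<mu> ?A / measure \<mu> ?B * (\<kappa> * measure \<mu> ?B)"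
        using mB by (simp add: field_simps)
      then show ?thesis
        using k0 mB by (simp add: ennreal_mult[symmetric] divide_nonneg_nonneg)
    qed
    also have "\<dots> = (\<integral>\<^sup>+t. (?K * ennreal \<kappa>) * indicator ?B t \<partial>\<mu>)"
      unfolding nn_integral_cmult_indicator[OF sB] by (simp add: mu.emeasure_eq_measure mult.assoc)
    also have "\<dots> = (\<integral>\<^sup>+t. ?K * fe ?B e (X(e := t)) \<partial>\<mu>)"
      by (rule nn_integral_cong) (simp add: Beq mult.assoc)
    finally show ?thesis .
  next
    case False
    then have "fe ?A e (X(e := t)) = 0" for t by (auto simp: fe_def)
    then show ?thesis by simp
  qed
qed

lemma edge_ineq:
  assumes e: "e \<in> Ed d" and bc: "b \<le> c" and mB: "measure \<mu> {r<..b} > 0"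
  shows "(\<integral>\<^sup>+w. fe {c<..h} e w \<partial>M)
     \<le> ennreal (measure \<mu> {c<..h} / measure \<mu> {r<..b}) * (\<integral>\<^sup>+w. fe {r<..b} e w \<partial>M)"
proof -
  let ?K = "ennreal (measure \<mu> {c<..h} / measure \<mu> {r<..b})"
  have mA[measurable]: "fe {c<..h} e \<in> borel_measurable M" by (rule fe_meas[OF e]) simp
  have mB'[measurable]: "fe {r<..b} e \<in> borel_measurable M" by (rule fe_meas[OF e]) simp
  have mK: "(\<lambda>w. ?K * fe {r<..b} e w) \<in> borel_measurable M" by measurable
  have "(\<integral>\<^sup>+w. fe {c<..h} e w \<partial>M)
      = (\<integral>\<^sup>+X. (\<integral>\<^sup>+t. fe {c<..h} e (X(e := t)) \<partial>\<mu>) \<partial>PiM (Ed d - {e}) (\<lambda>_. \<mu>))"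
    by (rule split_int[OF e mA])
  also have "\<dots> \<le> (\<integral>\<^sup>+X. (\<integral>\<^sup>+t. ?K * fe {r<..b} e (X(e := t)) \<partial>\<mu>) \<partial>PiM (Ed d - {e}) (\<lambda>_. \<mu>))"
    by (rule nn_integral_mono) (rule pointwise[OF bc mB])
  also have "\<dots> = (\<integral>\<^sup>+w. ?K * fe {r<..b} e w \<partial>M)"
    by (rule split_int[OF e mK, symmetric])
  also have "\<dots> = ?K * (\<integral>\<^sup>+w. fe {r<..b} e w \<partial>M)"
    by (rule nn_integral_cmult[OF mB'])
  finally show ?thesis .
qed

lemma main_ineq:
  assumes bc: "b \<le> c" and mB: "measure \<mu> {r<..b} > 0"
  shows "(\<integral>\<^sup>+w. ennreal (nu R d w x {c<..h}) \<partial>M) \<le> ennreal (measure \<mu> {c<..h} / measure \<mu> {r<..b})"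
proof -
  let ?K = "ennreal (measure \<mu> {c<..h} / measure \<mu> {r<..b})"
  interpret PM: prob_space M by (rule probM)
  have mA: "\<And>e. e \<in> Ed d \<Longrightarrow> fe {c<..h} e \<in> borel_measurable M" by (rule fe_meas) simp_all
  have mB': "\<And>e. e \<in> Ed d \<Longrightarrow> fe {r<..b} e \<in> borel_measurable M" by (rule fe_meas) simp_all
  have "(\<integral>\<^sup>+w. ennreal (nu R d w x {c<..h}) \<partial>M)
      = (\<integral>\<^sup>+w. (\<integral>\<^sup>+e. fe {c<..h} e w \<partial>count_space (Ed d)) \<partial>M)"
    by (simp add: nu_sum)
  also have "\<dots> = (\<integral>\<^sup>+e. (\<integral>\<^sup>+w. fe {c<..h} e w \<partial>M) \<partial>count_space (Ed d))"
    by (rule nn_integral_count_space_nn_integral[OF countable_Ed mA])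
  also have "\<dots> \<le> (\<integral>\<^sup>+e. ?K * (\<integral>\<^sup>+w. fe {r<..b} e w \<partial>M) \<partial>count_space (Ed d))"
    by (rule nn_integral_mono) (use edge_ineq[OF _ bc mB] in simp)
  also have "\<dots> = ?K * (\<integral>\<^sup>+e. (\<integral>\<^sup>+w. fe {r<..b} e w \<partial>M) \<partial>count_space (Ed d))"
    by (rule nn_integral_cmult) simp
  finally have 1: "(\<integral>\<^sup>+w. ennreal (nu R d w x {c<..h}) \<partial>M)
     \<le> ?K * (\<integral>\<^sup>+e. (\<integral>\<^sup>+w. fe {r<..b} e w \<partial>M) \<partial>count_space (Ed d))" .
  have "(\<integral>\<^sup>+e. (\<integral>\<^sup>+w. fe {r<..b} e w \<partial>M) \<partial>count_space (Ed d))
      = (\<integral>\<^sup>+w. (\<integral>\<^sup>+e. fe {r<..b} e w \<partial>count_space (Ed d)) \<partial>M)"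
    by (rule nn_integral_count_space_nn_integral[OF countable_Ed mB', symmetric])
  also have "\<dots> = (\<integral>\<^sup>+w. ennreal (nu R d w x {r<..b}) \<partial>M)"
    by (simp add: nu_sum)
  also have "\<dots> \<le> (\<integral>\<^sup>+w. 1 \<partial>M)"
    by (rule nn_integral_mono) (simp add: nu_le1)
  also have "\<dots> = 1" by (simp add: PM.emeasure_space_1)
  finally have 2: "(\<integral>\<^sup>+e. (\<integral>\<^sup>+w. fe {r<..b} e w \<partial>M) \<partial>count_space (Ed d)) \<le> 1" .
  from 1 mult_left_mono[OF 2, of ?K] show ?thesis by simp
qed

end

theorem proposition2p7:
  fixes d :: nat and \<mu> :: "real measure" and b :: real
    and R :: "(vertex list \<times> vertex list) set"
  assumes "2 \<le> d"
    and "prob_space \<mu>" and "sets \<mu> = sets borel" and "AE t in \<mu>. 0 \<le> t"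
    and "standing_assumption d \<mu>"
    and "Well_order R" and "Field R = UNIV"
    and "ess_inf_law \<mu> < b" and "measure \<mu> {ess_inf_law \<mu><..b} > 0"
  shows "\<exists>C>0. \<exists>N::nat. \<forall>c h x. b \<le> c \<longrightarrow> x \<in> Zd d \<longrightarrow> int N \<le> l1norm d x \<longrightarrow>
           (\<integral>\<omega>. nu R d \<omega> x {c<..h} \<partial>env d \<mu>) \<le> C * measure \<mu> {c<..h}"
proof -
  define r where "r = ess_inf_law \<mu>"
  define mB where "mB = measure \<mu> {r<..b}"
  have mB: "mB > 0" using assms(9) by (simp add: mB_def r_def)
  have key: "(\<integral>\<omega>. nu R d \<omega> x {c<..h} \<partial>env d \<mu>) \<le> 1 / mB * measure \<mu> {c<..h}"
    if bc: "b \<le> c" for c h x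
  proof -
    interpret fpp d \<mu> R x by (rule fpp.intro) (use assms in auto)
    have nn: "0 \<le> 1 / mB * measure \<mu> {c<..h}" using mB by simp
    show ?thesis
    proof (cases "integrable M (\<lambda>w. nu R d w x {c<..h})")
      case True
      have "ennreal (\<integral>w. nu R d w x {c<..h} \<partial>M) = (\<integral>\<^sup>+w. ennreal (nu R d w x {c<..h}) \<partial>M)"
        by (rule nn_integral_eq_integral[symmetric]) (use True nu_ge0 in auto)
      also have "\<dots> \<le> ennreal (measure \<mu> {c<..h} / measure \<mu> {r<..b})"
        by (rule main_ineq[OF bc]) (use mB in \<open>simp add: mB_def\<close>)
      finally have "(\<integral>w. nu R d w x {c<..h} \<partial>M) \<le> measure \<mu> {c<..h} / mB"
        using mB by (simp add: mB_def ennreal_le_iff)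
      then show ?thesis by simp
    next
      case False
      then show ?thesis using nn by (simp add: not_integrable_integral_eq)
    qed
  qed
  show ?thesis
    by (rule exI[of _ "1 / mB"], rule conjI, use mB in simp, rule exI[of _ 0]) (use key in blast)
qed

end
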